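(* Let $p\ge 1$ and $c>0$ be constants. For $a>0$ let $x_a:[0,\infty)\to\mathbb{R}$ be the unique solution of $$x'''+c\,x^p\, x''=0,\qquad x(0)=0=x'(0),\quad x''(0)=a,$$ let $h(a):=\lim_{t\to\infty}x_a'(t)$ and $\mu(a):=\lim_{t\to\infty}\big(h(a)t-x_a(t)\big)$ (both limits exist and are finite). Define $$c_2:=\Gamma\!\left(\tfrac{1}{2p+1}\right)\left(\frac{2^p}{c\,(2p+1)^{2p}}\right)^{\frac{1}{2p+1}},\qquad c_3:=\Gamma\!\left(\tfrac{2}{2p+1}\right)(2p+1)^{\frac{1-2p}{2p+1}}\left(\frac{2^p}{c}\right)^{\frac{2}{2p+1}},$$ $$c_4:=\frac{2^{2p/(2p+1)}\,\Gamma\big(2/(2p+1)\big)}{(2p+1)^{(2p-1)/(2p+1)}\,c^{2/(2p+1)}},$$ $$c_5:=\frac{1}{c_2^2}\left[\frac{c_3^2}{2}+\left(\frac{c_2}{c}\right)^{2/(p+1)}(p+1)^{(1-p)/(1+p)}\,\Gamma\!\left(\tfrac{2}{p+1}\right)+c_3\left(\frac{c_2}{c\,(p+1)^p}\right)^{1/(p+1)}\Gamma\!\left(\tfrac{1}{p+1}\right)\right].$$ Then for every $a>0$, $$c_4\, a^{1/(2p+1)}\le \mu(a)\le c_5\, a^{1/(2p+1)}.$$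
   Context: $\Gamma$ denotes the Euler Gamma function. *)

theory Defs
  imports "HOL-Analysis.Analysis"
begin

definition c2 :: "real \<Rightarrow> real \<Rightarrow> real" where
  "c2 p c = Gamma (1 / (2*p+1)) * (2 powr p / (c * (2*p+1) powr (2*p))) powr (1 / (2*p+1))"

definition c3 :: "real \<Rightarrow> real \<Rightarrow> real" where
  "c3 p c = Gamma (2 / (2*p+1)) * (2*p+1) powr ((1 - 2*p) / (2*p+1)) * (2 powr p / c) powr (2 / (2*p+1))"

definition c4 :: "real \<Rightarrow> real \<Rightarrow> real" where
  "c4 p c = (2 powr (2*p / (2*p+1)) * Gamma (2 / (2*p+1))) /
            ((2*p+1) powr ((2*p-1) / (2*p+1)) * c powr (2 / (2*p+1)))"

definition c5 :: "real \<Rightarrow> real \<Rightarrow> real" where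
  "c5 p c = (1 / (c2 p c)^2) *
     ((c3 p c)^2 / 2
      + (c2 p c / c) powr (2 / (p+1)) * (p+1) powr ((1-p) / (1+p)) * Gamma (2 / (p+1))
      + c3 p c * (c2 p c / (c * (p+1) powr p)) powr (1 / (p+1)) * Gamma (1 / (p+1)))"

end

theory Submission imports Defs begin

lemma gamma_int_pos:
  fixes K r k :: real
  assumes K: "K > 0" and r: "r > 0" and k: "k > 0"
  shows "((\<lambda>u. u powr (k-1) * exp(-K*u powr r)) has_integral (Gamma(k/r)/(r*K powr (k/r)))) {0<..}"
proof -
  define S :: "real set" where "S = {0<..}"
  define g where "g = (\<lambda>u::real. K * u powr r)"
  define g' where "g' = (\<lambda>u::real. K * (r * u powr (r-1)))"
  define f where "f = (\<lambda>s::real. s powr (k/r - 1) / exp s)"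
  have kr: "k/r > 0" using k r by simp
  have fint: "(f has_integral Gamma (k/r)) S"
  proof -
    have "(f has_integral Gamma (k/r)) {0..}" unfolding f_def by (rule Gamma_integral_real[OF kr])
    hence "((\<lambda>t. if t \<in> {0<..} then f t else 0) has_integral Gamma (k/r)) {0..}"
      by (rule has_integral_spike [of "{0}", rotated 2]) auto
    also have "?this = (f has_integral Gamma (k/r)) {0<..}"
      by (subst has_integral_restrict) auto
    finally show ?thesis unfolding S_def .
  qed
  have fabs: "f absolutely_integrable_on S"
    using fint by (intro nonnegative_absolutely_integrable_1) (auto simp: f_def S_def)
  have der: "(g has_field_derivative g' x) (at x within S)" if "x \<in> S" for x
    using that unfolding g_def g'_def S_def
    by (auto intro!: derivative_eq_intros)
  have inj: "inj_on g S"
    unfolding inj_on_def g_def S_def using K r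
    by (auto, metis linorder_neq_iff powr_less_mono2 less_imp_le less_irrefl)
  have img: "g ` S = S"
  proof
    show "g ` S \<subseteq> S" using K unfolding g_def S_def by auto
    show "S \<subseteq> g ` S"
    proof
      fix s assume "s \<in> S"
      hence s: "s > 0" by (simp add: S_def)
      have "g ((s/K) powr (1/r)) = s"
        unfolding g_def using s K r by (simp add: powr_powr)
      moreover have "(s/K) powr (1/r) \<in> S" using s K by (simp add: S_def)
      ultimately show "s \<in> g ` S" by (metis image_eqI)
    qed
  qed
  have "(\<lambda>x. \<bar>g' x\<bar> * f (g x)) absolutely_integrable_on S \<and> integral S (\<lambda>x. \<bar>g' x\<bar> * f (g x)) = Gamma (k/r)"
    using has_absolute_integral_change_of_variables_1'[OF _ der inj, of f "Gamma (k/r)"] fabs fint img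
    unfolding S_def by (auto simp: integral_unique)
  hence A: "((\<lambda>x. \<bar>g' x\<bar> * f (g x)) has_integral Gamma (k/r)) S"
    using set_lebesgue_integral_eq_integral(1) has_integral_integral by (metis)
  have eq: "\<bar>g' x\<bar> * f (g x) = (r * K powr (k/r)) * (x powr (k-1) * exp(-K*x powr r))" if "x \<in> S" for x
  proof -
    have x: "x > 0" using that by (simp add: S_def)
    have "(K * x powr r) powr (k/r - 1) = K powr (k/r - 1) * x powr (r*(k/r-1))"
      using x K by (simp add: powr_mult powr_powr)
    moreover have "K * K powr (k/r - 1) = K powr (k/r)" 
    proof -
      have "K powr (k/r) = K powr (1 + (k/r - 1))" by simp
      also have "\<dots> = K * K powr (k/r - 1)" using K powr_add[of K 1 "k/r-1"] by simp
      finally show ?thesis by simp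
    qed
    moreover have "x powr (r-1) * x powr (r*(k/r-1)) = x powr (k-1)"
      using r by (simp add: powr_add[symmetric] algebra_simps)
    ultimately show ?thesis unfolding g'_def f_def g_def using x K r
      by (simp add: exp_minus field_simps)
  qed
  have "((\<lambda>x. (r * K powr (k/r)) * (x powr (k-1) * exp(-K*x powr r))) has_integral Gamma (k/r)) S"
    using A eq by (rule has_integral_eq[rotated]) 
  hence "((\<lambda>x. inverse (r * K powr (k/r)) * ((r * K powr (k/r)) * (x powr (k-1) * exp(-K*x powr r)))) has_integral inverse (r * K powr (k/r)) * Gamma (k/r)) S"
    by (rule has_integral_mult_right)
  moreover have "r * K powr (k/r) \<noteq> 0" using r K by simp
  ultimately show ?thesis unfolding S_def by (simp add: field_simps)
qed

lemma pos_to_nonneg_int: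
  fixes f :: "real \<Rightarrow> real"
  assumes "(f has_integral I) {0<..}"
  shows "(f has_integral I) {0..}"
proof -
  have "((\<lambda>t. if t \<in> {0<..} then f t else 0) has_integral I) {0..}"
    using assms by (subst has_integral_restrict) auto
  thus ?thesis
    by (rule has_integral_spike [of "{0}", rotated 2]) auto
qed

lemma gam1:
  fixes K r :: real
  assumes K: "K > 0" and r: "r > 0"
  shows "((\<lambda>u. exp(-K*u powr r)) has_integral (Gamma(1/r)/(r*K powr (1/r)))) {0..}"
proof -
  have "((\<lambda>u. u powr (1-1) * exp(-K*u powr r)) has_integral (Gamma(1/r)/(r*K powr (1/r)))) {0<..}"
    by (rule gamma_int_pos[OF K r]) simp
  hence "((\<lambda>u. exp(-K*u powr r)) has_integral (Gamma(1/r)/(r*K powr (1/r)))) {0<..}"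
    by (rule has_integral_eq[rotated]) simp
  thus ?thesis by (rule pos_to_nonneg_int)
qed

lemma gam2:
  fixes K r :: real
  assumes K: "K > 0" and r: "r > 0"
  shows "((\<lambda>u. u * exp(-K*u powr r)) has_integral (Gamma(2/r)/(r*K powr (2/r)))) {0..}"
proof -
  have "((\<lambda>u. u powr (2-1) * exp(-K*u powr r)) has_integral (Gamma(2/r)/(r*K powr (2/r)))) {0<..}"
    by (rule gamma_int_pos[OF K r]) simp
  hence "((\<lambda>u. u * exp(-K*u powr r)) has_integral (Gamma(2/r)/(r*K powr (2/r)))) {0<..}"
    by (rule has_integral_eq[rotated]) simp
  thus ?thesis by (rule pos_to_nonneg_int)
qed

lemma partial_int:
  fixes f :: "real \<Rightarrow> real"
  assumes c: "continuous_on {0..} f" and nn: "\<And>x. x \<ge> 0 \<Longrightarrow> f x \<ge> 0" and I: "(f has_integral I) {0..}"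
  shows "integral {0..y} f \<le> I" and "((\<lambda>y. integral {0..y} f) \<longlongrightarrow> I) at_top"
proof -
  have ci: "f integrable_on {0..y}" for y
    by (rule integrable_continuous_interval) (rule continuous_on_subset[OF c], auto)
  show "integral {0..y} f \<le> I"
    using integral_subset_le[of "{0..y}" "{0..}" f] ci I nn
    by (auto simp: integral_unique has_integral_integrable)
  have abs: "f absolutely_integrable_on {0..}"
    using I nn by (intro nonnegative_absolutely_integrable_1) (auto simp: has_integral_integrable)
  have "((\<lambda>b. set_lebesgue_integral lebesgue {0..b} f) \<longlongrightarrow> set_lebesgue_integral lebesgue {0..} f) at_top"
    by (rule tendsto_set_lebesgue_integral_at_top) (use abs in auto)
  moreover have "set_lebesgue_integral lebesgue {0..b} f = integral {0..b} f" for b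
    by (rule set_lebesgue_integral_eq_integral(2)) (rule set_integrable_subset[OF abs], auto)
  moreover have "set_lebesgue_integral lebesgue {0..} f = I"
    using set_lebesgue_integral_eq_integral(2)[OF abs] I by (simp add: integral_unique)
  ultimately show "((\<lambda>y. integral {0..y} f) \<longlongrightarrow> I) at_top" by simp
qed

lemma incr:
  fixes f f' :: "real \<Rightarrow> real"
  assumes "s \<le> t" "continuous_on {s..t} f"
    "\<And>x. s < x \<Longrightarrow> x < t \<Longrightarrow> (f has_real_derivative f' x) (at x)"
    "\<And>x. s < x \<Longrightarrow> x < t \<Longrightarrow> f' x \<ge> 0"
  shows "f s \<le> f t"
  using assms by (intro DERIV_nonneg_imp_increasing_open[OF assms(1)]) blast+

lemma indef_cont:
  fixes w :: "real \<Rightarrow> real"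
  assumes "continuous_on {0..} w"
  shows "continuous_on {0..b} (\<lambda>u. integral {0..u} w)"
  by (rule indefinite_integral_continuous_1, rule integrable_continuous_interval,
      rule continuous_on_subset[OF assms]) auto

lemma indef_deriv:
  fixes w :: "real \<Rightarrow> real"
  assumes "continuous_on {0..} w" "y > 0"
  shows "((\<lambda>u. integral {0..u} w) has_real_derivative w y) (at y)"
proof -
  have "((\<lambda>u. integral {0..u} w) has_real_derivative w y) (at y within {0..y+1})"
    by (rule integral_has_real_derivative, rule continuous_on_subset[OF assms(1)]) (use assms in auto)
  moreover have "at y within {0..y+1} = at y"
    by (rule at_within_interior) (use assms in auto)
  ultimately show ?thesis by simp
qed

lemma within_to_at:
  fixes f f' :: "real \<Rightarrow> real"
  assumes "\<forall>t\<ge>0. (f has_real_derivative f' t) (at t within {0..})"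
  shows "continuous_on {0..} f" and "\<And>t. t > 0 \<Longrightarrow> (f has_real_derivative f' t) (at t)"
proof -
  show "continuous_on {0..} f"
    unfolding continuous_on_eq_continuous_within
    using assms DERIV_continuous by (metis atLeast_iff)
  fix t :: real assume "t > 0"
  hence "at t within {0..} = at t" by (intro at_within_interior) auto
  thus "(f has_real_derivative f' t) (at t)" using assms \<open>t > 0\<close> by (metis less_imp_le)
qed

lemma indef_within:
  fixes w :: "real \<Rightarrow> real"
  assumes "continuous_on {0..} w" "t \<ge> 0"
  shows "((\<lambda>u. integral {0..u} w) has_real_derivative w t) (at t within {0..})"
proof -
  have "((\<lambda>u. integral {0..u} w) has_real_derivative w t) (at t within {0..t+1})"
    by (rule integral_has_real_derivative, rule continuous_on_subset[OF assms(1)]) (use assms in auto)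
  moreover have "at t within {0..t+1} = at t within {0..}"
    by (rule at_within_nhd[of _ "{..<t+1}"]) (use assms in auto)
  ultimately show ?thesis by simp
qed

lemma indef_cont_all:
  fixes w :: "real \<Rightarrow> real"
  assumes "continuous_on {0..} w"
  shows "continuous_on {0..} (\<lambda>u. integral {0..u} w)"
  using within_to_at(1)[of "\<lambda>u. integral {0..u} w" w] indef_within[OF assms] by blast

lemma mono_lim:
  fixes f :: "real \<Rightarrow> real"
  assumes mono: "\<And>s t. 0 \<le> s \<Longrightarrow> s \<le> t \<Longrightarrow> f s \<le> f t"
    and bd: "\<And>t. 0 \<le> t \<Longrightarrow> f t \<le> B"
  shows "(f \<longlongrightarrow> Sup (f ` {0..})) at_top" "\<And>t. 0 \<le> t \<Longrightarrow> f t \<le> Sup (f ` {0..})"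
    "Sup (f ` {0..}) \<le> B"
proof -
  have bdd: "bdd_above (f ` {0..})" using bd by (auto intro!: bdd_aboveI)
  have ne: "f ` {0..} \<noteq> {}" by auto
  show le: "f t \<le> Sup (f ` {0..})" if "0 \<le> t" for t
    by (rule cSup_upper[OF _ bdd]) (use that in auto)
  show "Sup (f ` {0..}) \<le> B" by (rule cSup_least[OF ne]) (use bd in auto)
  show "(f \<longlongrightarrow> Sup (f ` {0..})) at_top"
  proof (rule order_tendstoI)
    fix y assume "y < Sup (f ` {0..})"
    then obtain z where z: "z \<in> f ` {0..}" "y < z" using less_cSupD[OF ne] by blast
    then obtain t0 where t0: "t0 \<ge> 0" "y < f t0" by auto
    show "\<forall>\<^sub>F t in at_top. y < f t"
      using eventually_ge_at_top[of t0] by (rule eventually_mono) (use t0 mono in force)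
  next
    fix y assume y: "Sup (f ` {0..}) < y"
    show "\<forall>\<^sub>F t in at_top. f t < y"
      using eventually_ge_at_top[of 0] by (rule eventually_mono) (use le y in force)
  qed
qed


theorem lemma5:
  fixes p c a :: real and x x1 x2 :: "real \<Rightarrow> real"
  assumes "p \<ge> 1" and "c > 0" and "a > 0"
    and "\<forall>t\<ge>0. (x has_real_derivative x1 t) (at t within {0..})"
    and "\<forall>t\<ge>0. (x1 has_real_derivative x2 t) (at t within {0..})"
    and "\<forall>t\<ge>0. (x2 has_real_derivative (- c * (x t powr p) * x2 t)) (at t within {0..})"
    and "x 0 = 0" and "x1 0 = 0" and "x2 0 = a"
  shows "\<exists>h \<mu>. (x1 \<longlongrightarrow> h) at_top \<and> ((\<lambda>t. h * t - x t) \<longlongrightarrow> \<mu>) at_top \<and>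
           c4 p c * a powr (1 / (2*p+1)) \<le> \<mu> \<and> \<mu> \<le> c5 p c * a powr (1 / (2*p+1))"
proof -
  note p = assms(1) and c = assms(2) and a = assms(3)
  note x0 = assms(7) and x10 = assms(8) and x20 = assms(9)
  have cx: "continuous_on {0..} x" and Dx: "\<And>t. t > 0 \<Longrightarrow> (x has_real_derivative x1 t) (at t)"
    using within_to_at[OF assms(4)] by auto
  have cx1: "continuous_on {0..} x1" and Dx1: "\<And>t. t > 0 \<Longrightarrow> (x1 has_real_derivative x2 t) (at t)"
    using within_to_at[OF assms(5)] by auto
  have cx2: "continuous_on {0..} x2" and Dx2: "\<And>t. t > 0 \<Longrightarrow> (x2 has_real_derivative (- c * (x t powr p) * x2 t)) (at t)"
    using within_to_at[OF assms(6)] by auto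
  have csub: "continuous_on {s..t} f" if "continuous_on {0..} f" "0 \<le> s" for f :: "real \<Rightarrow> real" and s t
    by (rule continuous_on_subset[OF that(1)]) (use that in auto)
  have x2pos: "x2 t > 0" if "t \<ge> 0" for t
  proof (rule ccontr)
    assume "\<not> x2 t > 0"
    define Z where "Z = {s. s \<ge> 0 \<and> x2 s \<le> 0}"
    have tZ: "t \<in> Z" using that \<open>\<not> x2 t > 0\<close> by (simp add: Z_def)
    have bdd: "bdd_below Z" unfolding Z_def by (rule bdd_belowI[of _ 0]) auto
    have clZ: "closed Z"
    proof -
      have "Z = {0..} \<inter> x2 -` {..0}" by (auto simp: Z_def)
      moreover have "closed ({0..} \<inter> x2 -` {..0})"
        by (rule continuous_closed_preimage[OF cx2]) auto
      ultimately show ?thesis by simp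
    qed
    define t0 where "t0 = Inf Z"
    have t0Z: "t0 \<in> Z" unfolding t0_def using closed_contains_Inf[OF _ bdd clZ] tZ by blast
    have t0ge: "t0 \<ge> 0" and x2t0: "x2 t0 \<le> 0" using t0Z by (auto simp: Z_def)
    have below: "x2 s > 0" if "0 \<le> s" "s < t0" for s
    proof (rule ccontr)
      assume "\<not> x2 s > 0"
      hence "s \<in> Z" using that by (auto simp: Z_def)
      hence "t0 \<le> s" unfolding t0_def by (rule cInf_lower[OF _ bdd])
      thus False using that by simp
    qed
    have t0pos: "t0 > 0" using x2t0 x20 a t0ge by (cases "t0 = 0") auto
    have x1mono: "x1 s \<le> x1 s'" if "0 \<le> s" "s \<le> s'" "s' \<le> t0" for s s'
      by (rule incr[OF that(2) csub[OF cx1 that(1)] Dx1]) (use that in \<open>auto intro!: less_imp_le[OF below]\<close>)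
    have xmono: "x s \<le> x s'" if "0 \<le> s" "s \<le> s'" "s' \<le> t0" for s s'
      by (rule incr[OF that(2) csub[OF cx that(1)] Dx]) (use that x1mono[of 0] x10 in auto)
    define M where "M = x t0"
    define Q where "Q = c * M powr p"
    have "x2 0 * exp (Q * 0) \<le> x2 t0 * exp (Q * t0)"
    proof (rule incr[OF t0ge csub[OF _ order_refl]])
      show "continuous_on {0..} (\<lambda>s. x2 s * exp (Q * s))"
        by (intro continuous_intros cx2)
      fix s assume s: "0 < s" "s < t0"
      show "((\<lambda>s. x2 s * exp (Q * s)) has_real_derivative
              exp (Q * s) * x2 s * (Q - c * x s powr p)) (at s)"
        using Dx2[OF s(1)] by (auto intro!: derivative_eq_intros simp: algebra_simps)
      have "x s powr p \<le> M powr p" unfolding M_def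
        by (rule powr_mono2) (use p s xmono[of 0 s] xmono[of s t0] x0 in auto)
      hence "Q - c * x s powr p \<ge> 0" unfolding Q_def using c by (simp add: mult_left_mono)
      thus "exp (Q * s) * x2 s * (Q - c * x s powr p) \<ge> 0"
        using below[of s] s by simp
    qed
    thus False using x20 a x2t0 by (simp add: mult_nonneg_nonpos) (smt (verit) mult_nonpos_nonneg exp_gt_zero)
  qed
  have x1mono: "x1 s \<le> x1 t" if "0 \<le> s" "s \<le> t" for s t
    by (rule incr[OF that(2) csub[OF cx1 that(1)] Dx1]) (use that in \<open>auto intro!: less_imp_le[OF x2pos]\<close>)
  have x1nn: "x1 t \<ge> 0" if "t \<ge> 0" for t using x1mono[of 0 t] that x10 by simp
  have xmono: "x s \<le> x t" if "0 \<le> s" "s \<le> t" for s t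
    by (rule incr[OF that(2) csub[OF cx that(1)] Dx]) (use that in \<open>auto intro!: x1nn\<close>)
  have xnn: "x t \<ge> 0" if "t \<ge> 0" for t using xmono[of 0 t] that x0 by simp
  have x2anti: "x2 t \<le> x2 s" if "0 \<le> s" "s \<le> t" for s t
  proof -
    have "- x2 s \<le> - x2 t"
    proof (rule incr[OF that(2)])
      show "continuous_on {s..t} (\<lambda>s. - x2 s)" by (intro continuous_intros csub[OF cx2 that(1)])
      fix y assume y: "s < y" "y < t"
      hence y0: "y > 0" using that by simp
      show "((\<lambda>s. - x2 s) has_real_derivative - (- c * (x y powr p) * x2 y)) (at y)"
        by (rule DERIV_minus Dx2 y0)+
      show "- (- c * (x y powr p) * x2 y) \<ge> 0" using c x2pos[of y] y0 by simp
    qed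
    thus ?thesis by simp
  qed
  have x2le: "x2 t \<le> a" if "t \<ge> 0" for t using x2anti[of 0 t] that x20 by simp
  have x1le: "x1 t \<le> a * t" if "t \<ge> 0" for t
  proof -
    have "a * 0 - x1 0 \<le> a * t - x1 t"
    proof (rule incr[OF that])
      show "continuous_on {0..t} (\<lambda>s. a * s - x1 s)" by (intro continuous_intros csub[OF cx1]) auto
      fix y assume y: "0 < y" "y < t"
      show "((\<lambda>s. a * s - x1 s) has_real_derivative a - x2 y) (at y)"
        using Dx1[OF y(1)] by (auto intro!: derivative_eq_intros)
      show "a - x2 y \<ge> 0" using x2le[of y] y by simp
    qed
    thus ?thesis using x10 by simp
  qed
  have xle: "x t \<le> a * t^2 / 2" if "t \<ge> 0" for t
  proof -
    have "a * 0^2/2 - x 0 \<le> a * t^2/2 - x t"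
    proof (rule incr[OF that])
      show "continuous_on {0..t} (\<lambda>s. a * s^2/2 - x s)" by (intro continuous_intros csub[OF cx]) auto
      fix y assume y: "0 < y" "y < t"
      show "((\<lambda>s. a * s^2/2 - x s) has_real_derivative a * y - x1 y) (at y)"
        using Dx[OF y(1)] by (auto intro!: derivative_eq_intros)
      show "a * y - x1 y \<ge> 0" using x1le[of y] y by simp
    qed
    thus ?thesis using x0 by simp
  qed
  define q where "q = 2*p+1"
  have q: "q \<ge> 3" using p by (simp add: q_def)
  define K where "K = c * (a/2) powr p / q"
  have K: "K > 0" using c a q by (simp add: K_def)
  define g where "g = (\<lambda>u. a * exp (- K * u powr q))"
  have x2ge: "x2 t \<ge> g t" if "t \<ge> 0" for t
  proof -
    have "x2 0 * exp (K * 0 powr q) \<le> x2 t * exp (K * t powr q)"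
    proof (rule incr[OF that])
      show "continuous_on {0..t} (\<lambda>s. x2 s * exp (K * s powr q))"
        by (intro continuous_intros csub[OF cx2] continuous_on_powr') (use q in auto)
      fix y assume y: "0 < y" "y < t"
      show "((\<lambda>s. x2 s * exp (K * s powr q)) has_real_derivative
             exp (K * y powr q) * x2 y * (K * q * y powr (q - 1) - c * x y powr p)) (at y)"
        using Dx2[OF y(1)] y by (auto intro!: derivative_eq_intros simp: algebra_simps)
      have "x y powr p \<le> (a * y^2/2) powr p"
        by (rule powr_mono2) (use p y xnn[of y] xle[of y] in auto)
      also have "\<dots> = (a/2) powr p * y powr (q - 1)"
      proof -
        have e: "a * y^2/2 = (a/2) * y powr 2" using y by (simp add: powr_numeral)
        have "(a * y^2/2) powr p = ((a/2) * y powr 2) powr p" by (simp only: e)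
        also have "\<dots> = (a/2) powr p * (y powr 2) powr p" by (rule powr_mult)
        also have "(y powr 2) powr p = y powr (q - 1)" by (simp add: powr_powr q_def)
        finally show ?thesis .
      qed
      finally have "c * x y powr p \<le> K * q * y powr (q - 1)"
        unfolding K_def using c q by (simp add: mult_left_mono)
      thus "exp (K * y powr q) * x2 y * (K * q * y powr (q - 1) - c * x y powr p) \<ge> 0"
        using x2pos[of y] y by simp
    qed
    hence "a \<le> x2 t * exp (K * t powr q)" using x20 by simp
    thus ?thesis unfolding g_def by (simp add: exp_minus field_simps)
  qed
  have cg: "continuous_on {0..} g" unfolding g_def
    by (intro continuous_intros continuous_on_powr') (use q in auto)
  have gnn: "g u \<ge> 0" for u unfolding g_def using a by simp
  define h0 where "h0 = a * (Gamma(1/q)/(q*K powr (1/q)))"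
  define mu0 where "mu0 = a * (Gamma(2/q)/(q*K powr (2/q)))"
  have gint: "(g has_integral h0) {0..}" unfolding g_def h0_def
    by (rule has_integral_mult_right, rule gam1[OF K]) (use q in auto)
  define gu where "gu = (\<lambda>u. a * (u * exp (- K * u powr q)))"
  have gu_eq: "gu u = u * g u" for u unfolding gu_def g_def by simp
  have guint: "(gu has_integral mu0) {0..}" unfolding gu_def mu0_def
    by (rule has_integral_mult_right, rule gam2[OF K]) (use q in auto)
  have cgu: "continuous_on {0..} gu" unfolding gu_def
    by (intro continuous_intros continuous_on_powr') (use q in auto)
  have gunn: "gu u \<ge> 0" if "u \<ge> 0" for u unfolding gu_eq using gnn that by simp
  define G where "G = (\<lambda>t. integral {0..t} g)"
  define H where "H = (\<lambda>t. integral {0..t} G)"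
  define Igu where "Igu = (\<lambda>t. integral {0..t} gu)"
  have cG: "continuous_on {0..} G" unfolding G_def by (rule indef_cont_all[OF cg])
  have cH: "continuous_on {0..} H" unfolding H_def by (rule indef_cont_all[OF cG])
  have cIgu: "continuous_on {0..} Igu" unfolding Igu_def by (rule indef_cont_all[OF cgu])
  have DG: "(G has_real_derivative g t) (at t)" if "t > 0" for t
    unfolding G_def by (rule indef_deriv[OF cg that])
  have DH: "(H has_real_derivative G t) (at t)" if "t > 0" for t
    unfolding H_def by (rule indef_deriv[OF cG that])
  have DIgu: "(Igu has_real_derivative gu t) (at t)" if "t > 0" for t
    unfolding Igu_def by (rule indef_deriv[OF cgu that])
  have G0: "G 0 = 0" and H0: "H 0 = 0" and Igu0: "Igu 0 = 0" by (simp_all add: G_def H_def Igu_def)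
  have Gmono: "G s \<le> G t" if "0 \<le> s" "s \<le> t" for s t
    by (rule incr[OF that(2) csub[OF cG that(1)] DG]) (use that gnn in auto)
  have Glim: "(G \<longlongrightarrow> h0) at_top" unfolding G_def by (rule partial_int(2)[OF cg gnn gint])
  have Iguub: "Igu t \<le> mu0" for t unfolding Igu_def by (rule partial_int(1)[OF cgu gunn guint])
  have Igulim: "(Igu \<longlongrightarrow> mu0) at_top" unfolding Igu_def by (rule partial_int(2)[OF cgu gunn guint])
  have x1geG: "x1 t \<ge> G t" if "t \<ge> 0" for t
  proof -
    have "x1 0 - G 0 \<le> x1 t - G t"
    proof (rule incr[OF that])
      show "continuous_on {0..t} (\<lambda>s. x1 s - G s)" by (intro continuous_intros csub[OF cx1] csub[OF cG]) auto
      fix y assume y: "0 < y" "y < t"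
      show "((\<lambda>s. x1 s - G s) has_real_derivative x2 y - g y) (at y)"
        using Dx1[OF y(1)] DG[OF y(1)] by (auto intro!: derivative_eq_intros)
      show "x2 y - g y \<ge> 0" using x2ge[of y] y by simp
    qed
    thus ?thesis using x10 G0 by simp
  qed
  have xgeH: "x t \<ge> H t" if "t \<ge> 0" for t
  proof -
    have "x 0 - H 0 \<le> x t - H t"
    proof (rule incr[OF that])
      show "continuous_on {0..t} (\<lambda>s. x s - H s)" by (intro continuous_intros csub[OF cx] csub[OF cH]) auto
      fix y assume y: "0 < y" "y < t"
      show "((\<lambda>s. x s - H s) has_real_derivative x1 y - G y) (at y)"
        using Dx[OF y(1)] DH[OF y(1)] by (auto intro!: derivative_eq_intros)
      show "x1 y - G y \<ge> 0" using x1geG[of y] y by simp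
    qed
    thus ?thesis using x0 H0 by simp
  qed
  have Hlow: "h0 * t - mu0 \<le> H t" if t: "t \<ge> 0" for t
  proof -
    have key: "t * G s - H t \<le> mu0" if s: "s \<ge> t" for s
    proof -
      have "(t - t) * G s - (H t - H t) \<le> (s - t) * G s - (H s - H t)"
      proof (rule incr[OF s])
        show "continuous_on {t..s} (\<lambda>r. (r - t) * G s - (H r - H t))"
          by (intro continuous_intros csub[OF cH t])
        fix y assume y: "t < y" "y < s"
        show "((\<lambda>r. (r - t) * G s - (H r - H t)) has_real_derivative G s - G y) (at y)"
          using DH[of y] y t by (auto intro!: derivative_eq_intros)
        show "G s - G y \<ge> 0" using Gmono[of y s] y t by simp
      qed
      moreover have "Igu 0 - (0 * G 0 - H 0) \<le> Igu s - (s * G s - H s)"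
      proof (rule incr[where f="\<lambda>r. Igu r - (r * G r - H r)" and f' = "\<lambda>_. 0"])
        show "0 \<le> s" using s t by simp
        show "continuous_on {0..s} (\<lambda>r. Igu r - (r * G r - H r))"
          by (intro continuous_intros csub[OF cH] csub[OF cG] csub[OF cIgu]) auto
        fix y :: real assume y: "0 < y" "y < s"
        show "((\<lambda>r. Igu r - (r * G r - H r)) has_real_derivative 0) (at y)"
          using DH[OF y(1)] DG[OF y(1)] DIgu[OF y(1)]
          by (auto intro!: derivative_eq_intros simp: gu_eq)
      qed simp
      ultimately show ?thesis using Iguub[of s] G0 H0 Igu0 by (simp add: algebra_simps)
    qed
    have "h0 * t - H t \<le> mu0"
    proof (rule tendsto_le[OF _ tendsto_const])
      show "((\<lambda>s. t * G s - H t) \<longlongrightarrow> h0 * t - H t) at_top"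
        using Glim by (auto intro!: tendsto_eq_intros)
      show "\<forall>\<^sub>F s in at_top. t * G s - H t \<le> mu0"
        using eventually_ge_at_top[of t] by (rule eventually_mono) (rule key)
    qed simp
    thus ?thesis by simp
  qed
  have xlow: "x t \<ge> h0 * t - mu0" if "t \<ge> 0" for t using Hlow[OF that] xgeH[OF that] by simp
  have h0pos: "h0 > 0" unfolding h0_def using a q K by (simp add: Gamma_real_pos)
  have mu0pos: "mu0 > 0" unfolding mu0_def using a q K by (simp add: Gamma_real_pos)
  define T where "T = mu0 / h0"
  have T: "T > 0" unfolding T_def using h0pos mu0pos by simp
  define L where "L = c * h0 powr p / (p+1)"
  have L: "L > 0" unfolding L_def using c h0pos p by simp
  define e where "e = (\<lambda>v. exp (- L * v powr (p+1)))"
  have x2up: "x2 t \<le> a * e (t - T)" if t: "t \<ge> T" for t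
  proof -
    have "- (x2 T * exp (L * (T - T) powr (p+1))) \<le> - (x2 t * exp (L * (t - T) powr (p+1)))"
    proof (rule incr[OF t])
      show "continuous_on {T..t} (\<lambda>s. - (x2 s * exp (L * (s - T) powr (p+1))))"
        by (intro continuous_intros csub[OF cx2] continuous_on_powr') (use T p in auto)
      fix y assume y: "T < y" "y < t"
      hence y0: "y > 0" using T by simp
      show "((\<lambda>s. - (x2 s * exp (L * (s - T) powr (p+1)))) has_real_derivative
             - (exp (L * (y - T) powr (p+1)) * x2 y * (L * (p+1) * (y - T) powr p - c * x y powr p))) (at y)"
        using Dx2[OF y0] y by (auto intro!: derivative_eq_intros simp: algebra_simps)
      have "h0 powr p * (y - T) powr p = (h0 * (y - T)) powr p" by (rule powr_mult[symmetric])
      also have "\<dots> \<le> x y powr p"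
      proof (rule powr_mono2)
        show "0 \<le> h0 * (y - T)" using h0pos y by simp
        show "h0 * (y - T) \<le> x y" using xlow[of y] y0 h0pos unfolding T_def by (simp add: algebra_simps)
      qed (use p in auto)
      finally have "L * (p+1) * (y - T) powr p \<le> c * x y powr p"
        unfolding L_def using c p by (simp add: mult_left_mono)
      thus "- (exp (L * (y - T) powr (p+1)) * x2 y * (L * (p+1) * (y - T) powr p - c * x y powr p)) \<ge> 0"
        using x2pos[of y] y0 by (simp add: mult_nonneg_nonpos)
    qed
    hence "x2 t * exp (L * (t - T) powr (p+1)) \<le> a"
      using x2le[of T] T by simp
    thus ?thesis unfolding e_def by (simp add: exp_minus field_simps)
  qed
  define A where "A = Gamma(1/(p+1))/((p+1) * L powr (1/(p+1)))"
  define B where "B = Gamma(2/(p+1))/((p+1) * L powr (2/(p+1)))"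
  have eint: "((\<lambda>v. a * e v) has_integral a * A) {0..}" unfolding e_def A_def
    by (rule has_integral_mult_right, rule gam1[OF L]) (use p in auto)
  define w where "w = (\<lambda>v. a * ((v + T) * e v))"
  have wint: "(w has_integral a * B + a * T * A) {0..}"
  proof -
    have 1: "((\<lambda>v. a * (v * e v)) has_integral a * B) {0..}" unfolding e_def B_def
      by (rule has_integral_mult_right, rule gam2[OF L]) (use p in auto)
    have 2: "((\<lambda>v. T * (a * e v)) has_integral T * (a * A)) {0..}"
      by (rule has_integral_mult_right[OF eint])
    have "((\<lambda>v. a * (v * e v) + T * (a * e v)) has_integral a * B + T * (a * A)) {0..}"
      by (rule has_integral_add[OF 1 2])
    thus ?thesis unfolding w_def by (simp add: algebra_simps)
  qed
  have ce: "continuous_on {0..} (\<lambda>v. a * e v)" unfolding e_def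
    by (intro continuous_intros continuous_on_powr') (use p in auto)
  have cw: "continuous_on {0..} w" unfolding w_def e_def
    by (intro continuous_intros continuous_on_powr') (use p in auto)
  have enn: "a * e v \<ge> 0" for v unfolding e_def using a by simp
  have wnn: "w v \<ge> 0" if "v \<ge> 0" for v unfolding w_def e_def using a that T by simp
  define Ie where "Ie = (\<lambda>y. integral {0..y} (\<lambda>v. a * e v))"
  define Iw where "Iw = (\<lambda>y. integral {0..y} w)"
  have Ieub: "Ie y \<le> a * A" for y unfolding Ie_def by (rule partial_int(1)[OF ce enn eint])
  have Iwub: "Iw y \<le> a * B + a * T * A" for y unfolding Iw_def by (rule partial_int(1)[OF cw wnn wint])
  have cIe: "continuous_on {0..} Ie" unfolding Ie_def by (rule indef_cont_all[OF ce])
  have cIw: "continuous_on {0..} Iw" unfolding Iw_def by (rule indef_cont_all[OF cw])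
  have DIe: "((\<lambda>r. Ie (r - T)) has_real_derivative a * e (r - T)) (at r)" if "r > T" for r
  proof -
    have "(Ie has_real_derivative a * e (r - T)) (at (r - T))"
      unfolding Ie_def by (rule indef_deriv[OF ce]) (use that in simp)
    moreover have "((\<lambda>r. r - T) has_real_derivative 1) (at r)" by (auto intro!: derivative_eq_intros)
    ultimately show ?thesis using DERIV_chain2 by fastforce
  qed
  have DIw: "((\<lambda>r. Iw (r - T)) has_real_derivative w (r - T)) (at r)" if "r > T" for r
  proof -
    have "(Iw has_real_derivative w (r - T)) (at (r - T))"
      unfolding Iw_def by (rule indef_deriv[OF cw]) (use that in simp)
    moreover have "((\<lambda>r. r - T) has_real_derivative 1) (at r)" by (auto intro!: derivative_eq_intros)
    ultimately show ?thesis using DERIV_chain2 by fastforce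
  qed
  have cIeT: "continuous_on {T..s} (\<lambda>r. Ie (r - T))" for s
    by (rule continuous_on_compose2[OF cIe]) (auto intro!: continuous_intros)
  have cIwT: "continuous_on {T..s} (\<lambda>r. Iw (r - T))" for s
    by (rule continuous_on_compose2[OF cIw]) (auto intro!: continuous_intros)
  have Ie0: "Ie 0 = 0" and Iw0: "Iw 0 = 0" by (simp_all add: Ie_def Iw_def)
  define Phi where "Phi = (\<lambda>s. s * x1 s - x s)"
  have cPhi: "continuous_on {0..} Phi" unfolding Phi_def by (intro continuous_intros cx cx1)
  have DPhi: "(Phi has_real_derivative s * x2 s) (at s)" if "s > 0" for s
    unfolding Phi_def using Dx[OF that] Dx1[OF that] by (auto intro!: derivative_eq_intros)
  have Phi0: "Phi 0 = 0" unfolding Phi_def using x0 by simp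
  have Phile1: "Phi s \<le> a * s^2 / 2" if s: "s \<ge> 0" for s
  proof -
    have "a * 0^2/2 - Phi 0 \<le> a * s^2/2 - Phi s"
    proof (rule incr[OF s])
      show "continuous_on {0..s} (\<lambda>r. a * r^2/2 - Phi r)" by (intro continuous_intros csub[OF cPhi]) auto
      fix y assume y: "0 < y" "y < s"
      show "((\<lambda>r. a * r^2/2 - Phi r) has_real_derivative a * y - y * x2 y) (at y)"
        using DPhi[OF y(1)] by (auto intro!: derivative_eq_intros)
      show "a * y - y * x2 y \<ge> 0" using x2le[of y] y by (simp add: mult_left_mono algebra_simps)
    qed
    thus ?thesis using Phi0 by simp
  qed
  have Phile2: "Phi s - Phi T \<le> Iw (s - T)" if s: "s \<ge> T" for s
  proof -
    have "Iw (T - T) - (Phi T - Phi T) \<le> Iw (s - T) - (Phi s - Phi T)"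
    proof (rule incr[OF s])
      show "continuous_on {T..s} (\<lambda>r. Iw (r - T) - (Phi r - Phi T))"
        by (intro continuous_intros cIwT csub[OF cPhi]) (use T in auto)
      fix y assume y: "T < y" "y < s"
      hence y0: "y > 0" using T by simp
      show "((\<lambda>r. Iw (r - T) - (Phi r - Phi T)) has_real_derivative w (y - T) - y * x2 y) (at y)"
        using DPhi[OF y0] DIw[OF y(1)] by (auto intro!: derivative_eq_intros)
      have "y * x2 y \<le> y * (a * e (y - T))" using x2up[of y] y y0 by (simp add: mult_left_mono)
      thus "w (y - T) - y * x2 y \<ge> 0" unfolding w_def by (simp add: algebra_simps)
    qed
    thus ?thesis using Iw0 by simp
  qed
  define U where "U = a * T^2 / 2 + (a * B + a * T * A)"
  have Ann: "A \<ge> 0" unfolding A_def using p L by (simp add: Gamma_real_pos less_imp_le)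
  have Bnn: "B \<ge> 0" unfolding B_def using p L by (simp add: Gamma_real_pos less_imp_le)
  have PhiU: "Phi s \<le> U" if s: "s \<ge> 0" for s
  proof (cases "s \<le> T")
    case True
    have "Phi s \<le> a * s^2/2" by (rule Phile1[OF s])
    also have "\<dots> \<le> a * T^2/2" using True s a by (simp add: power_mono)
    also have "\<dots> \<le> U" unfolding U_def using a T Ann Bnn by simp
    finally show ?thesis .
  next
    case False
    hence "Phi s \<le> Phi T + Iw (s - T)" using Phile2[of s] by simp
    also have "\<dots> \<le> a * T^2/2 + (a * B + a * T * A)" using Phile1[of T] T Iwub[of "s - T"] by simp
    finally show ?thesis unfolding U_def .
  qed
  have x1ub: "x1 s \<le> a * T + a * A" if s: "s \<ge> 0" for s
  proof -
    have "x1 T \<le> a * T" using x1le[of T] T by simp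
    have x1T: "x1 t - x1 T \<le> Ie (t - T)" if t: "t \<ge> T" for t
    proof -
      have "Ie (T - T) - (x1 T - x1 T) \<le> Ie (t - T) - (x1 t - x1 T)"
      proof (rule incr[OF t])
        show "continuous_on {T..t} (\<lambda>r. Ie (r - T) - (x1 r - x1 T))"
          by (intro continuous_intros cIeT csub[OF cx1]) (use T in auto)
        fix y assume y: "T < y" "y < t"
        hence y0: "y > 0" using T by simp
        show "((\<lambda>r. Ie (r - T) - (x1 r - x1 T)) has_real_derivative a * e (y - T) - x2 y) (at y)"
          using Dx1[OF y0] DIe[OF y(1)] by (auto intro!: derivative_eq_intros)
        show "a * e (y - T) - x2 y \<ge> 0" using x2up[of y] y by simp
      qed
      thus ?thesis using Ie0 by simp
    qed
    show ?thesis
    proof (cases "s \<le> T")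
      case True
      thus ?thesis using x1mono[OF s True] \<open>x1 T \<le> a * T\<close> a Ann by (smt (verit) mult_nonneg_nonneg)
    next
      case False
      thus ?thesis using x1T[of s] Ieub[of "s - T"] \<open>x1 T \<le> a * T\<close> by simp
    qed
  qed
  define h where "h = Sup (x1 ` {0..})"
  have hlim: "(x1 \<longlongrightarrow> h) at_top" and x1h: "\<And>t. 0 \<le> t \<Longrightarrow> x1 t \<le> h"
    unfolding h_def using mono_lim[of x1 "a * T + a * A", OF x1mono x1ub] by auto
  define psi where "psi = (\<lambda>t. h * t - x t)"
  have psimono: "psi s \<le> psi t" if "0 \<le> s" "s \<le> t" for s t
  proof (rule incr[OF that(2)])
    show "continuous_on {s..t} psi" unfolding psi_def by (intro continuous_intros csub[OF cx that(1)])
    fix y assume y: "s < y" "y < t"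
    hence y0: "y > 0" using that by simp
    show "(psi has_real_derivative h - x1 y) (at y)"
      unfolding psi_def using Dx[OF y0] by (auto intro!: derivative_eq_intros)
    show "h - x1 y \<ge> 0" using x1h[of y] y0 by simp
  qed
  have psiU: "psi t \<le> U" if t: "t \<ge> 0" for t
  proof -
    have key: "x1 s * t - x t \<le> U" if s: "s \<ge> t" for s
    proof -
      have "(t - t) * x1 s - (x t - x t) \<le> (s - t) * x1 s - (x s - x t)"
      proof (rule incr[OF s])
        show "continuous_on {t..s} (\<lambda>r. (r - t) * x1 s - (x r - x t))"
          by (intro continuous_intros csub[OF cx t])
        fix y assume y: "t < y" "y < s"
        hence y0: "y > 0" using t by simp
        show "((\<lambda>r. (r - t) * x1 s - (x r - x t)) has_real_derivative x1 s - x1 y) (at y)"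
          using Dx[OF y0] by (auto intro!: derivative_eq_intros)
        show "x1 s - x1 y \<ge> 0" using x1mono[of y s] y y0 by simp
      qed
      hence "x1 s * t - x t \<le> Phi s" unfolding Phi_def by (simp add: algebra_simps)
      thus ?thesis using PhiU[of s] s t by simp
    qed
    have "h * t - x t \<le> U"
    proof (rule tendsto_le[OF _ tendsto_const])
      show "((\<lambda>s. x1 s * t - x t) \<longlongrightarrow> h * t - x t) at_top"
        using hlim by (auto intro!: tendsto_eq_intros)
      show "\<forall>\<^sub>F s in at_top. x1 s * t - x t \<le> U"
        using eventually_ge_at_top[of t] by (rule eventually_mono) (rule key)
    qed simp
    thus ?thesis unfolding psi_def .
  qed
  define mu where "mu = Sup (psi ` {0..})"
  have mulim: "(psi \<longlongrightarrow> mu) at_top" and psimu: "\<And>t. 0 \<le> t \<Longrightarrow> psi t \<le> mu" and muU: "mu \<le> U"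
    unfolding mu_def using mono_lim[of psi U, OF psimono psiU] by auto
  have Igumu: "Igu t \<le> mu" if t: "t \<ge> 0" for t
  proof -
    have "Phi 0 - Igu 0 \<le> Phi t - Igu t"
    proof (rule incr[OF t])
      show "continuous_on {0..t} (\<lambda>r. Phi r - Igu r)" by (intro continuous_intros csub[OF cPhi] csub[OF cIgu]) auto
      fix y assume y: "0 < y" "y < t"
      show "((\<lambda>r. Phi r - Igu r) has_real_derivative y * x2 y - gu y) (at y)"
        using DPhi[OF y(1)] DIgu[OF y(1)] by (auto intro!: derivative_eq_intros)
      show "y * x2 y - gu y \<ge> 0" using x2ge[of y] y unfolding gu_eq by (simp add: mult_left_mono)
    qed
    hence "Igu t \<le> Phi t" using Phi0 Igu0 by simp
    also have "Phi t \<le> psi t" unfolding Phi_def psi_def using mult_left_mono[OF x1h[OF t] t] by (simp add: mult.commute)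
    also have "\<dots> \<le> mu" by (rule psimu[OF t])
    finally show ?thesis .
  qed
  have mu0mu: "mu0 \<le> mu"
  proof (rule tendsto_le[OF _ tendsto_const Igulim])
    show "\<forall>\<^sub>F t in at_top. Igu t \<le> mu"
      using eventually_ge_at_top[of 0] by (rule eventually_mono) (rule Igumu)
  qed simp
  have qpos: "q > 0" using q by simp
  have peq: "p = (q - 1)/2" unfolding q_def by simp
  have G1: "Gamma (1/q) > 0" "Gamma (2/q) > 0" "Gamma (1/(p+1)) > 0" "Gamma (2/(p+1)) > 0"
    using qpos p by (simp_all add: Gamma_real_pos)
  have G1n: "Gamma (1/q) \<noteq> 0" "Gamma (2/q) \<noteq> 0" "Gamma (1/(p+1)) \<noteq> 0" "Gamma (2/(p+1)) \<noteq> 0"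
    using G1 by auto
  have lnK: "ln K = ln c + p * (ln a - ln 2) - ln q"
    unfolding K_def using c a qpos by (simp add: ln_mult ln_div ln_powr)
  have lnh0: "ln h0 = ln a + ln (Gamma (1/q)) - ln q - ln K / q"
    unfolding h0_def using a qpos K G1 G1n by (simp add: ln_mult ln_div ln_powr)
  have lnmu0: "ln mu0 = ln a + ln (Gamma (2/q)) - ln q - 2 * ln K / q"
    unfolding mu0_def using a qpos K G1 G1n by (simp add: ln_mult ln_div ln_powr)
  have lnL: "ln L = ln c + p * ln h0 - ln (p+1)"
    unfolding L_def using c h0pos p by (simp add: ln_mult ln_div ln_powr)
  have lnA: "ln A = ln (Gamma (1/(p+1))) - ln (p+1) - ln L / (p+1)"
    unfolding A_def using L p G1 G1n by (simp add: ln_mult ln_div ln_powr)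
  have lnB: "ln B = ln (Gamma (2/(p+1))) - ln (p+1) - 2 * ln L / (p+1)"
    unfolding B_def using L p G1 G1n by (simp add: ln_mult ln_div ln_powr)
  have lnc4: "ln (c4 p c * a powr (1/q)) = 2*p/q * ln 2 + ln (Gamma (2/q)) - (2*p-1)/q * ln q - 2/q * ln c + ln a / q"
    unfolding c4_def q_def[symmetric] using c a qpos G1 G1n by (simp add: ln_mult ln_div ln_powr)
  have c4pos: "c4 p c * a powr (1/q) > 0"
    unfolding c4_def q_def[symmetric] using c a qpos G1 by simp
  have E1: "c4 p c * a powr (1/q) = mu0"
  proof -
    have "ln (c4 p c * a powr (1/q)) = ln mu0"
      unfolding lnc4 lnmu0 lnK using qpos unfolding peq by (simp add: field_simps)
    thus ?thesis using c4pos mu0pos by simp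
  qed
  define C2 where "C2 = c2 p c"
  define C3 where "C3 = c3 p c"
  define X where "X = (C2 / c) powr (2 / (p+1)) * (p+1) powr ((1-p) / (1+p)) * Gamma (2 / (p+1))"
  define Y where "Y = C3 * (C2 / (c * (p+1) powr p)) powr (1 / (p+1)) * Gamma (1 / (p+1))"
  have c5eq: "c5 p c = (1 / C2^2) * (C3^2/2 + X + Y)"
    unfolding c5_def C2_def C3_def X_def Y_def ..
  have C2pos: "C2 > 0" unfolding C2_def c2_def q_def[symmetric] using G1 c qpos by simp
  have C3pos: "C3 > 0" unfolding C3_def c3_def q_def[symmetric] using G1 c qpos by simp
  have Xpos: "X > 0" unfolding X_def using G1 c C2pos p by simp
  have Ypos: "Y > 0" unfolding Y_def using G1 c C2pos C3pos p by simp
  have lnC2: "ln C2 = ln (Gamma (1/q)) + (p * ln 2 - ln c - 2*p * ln q) / q"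
    unfolding C2_def c2_def q_def[symmetric] using G1 G1n c qpos by (simp add: ln_mult ln_div ln_powr)
  have lnC3: "ln C3 = ln (Gamma (2/q)) + (1 - 2*p)/q * ln q + 2/q * (p * ln 2 - ln c)"
    unfolding C3_def c3_def q_def[symmetric] using G1 G1n c qpos by (simp add: ln_mult ln_div ln_powr)
  have lnX: "ln X = 2/(p+1) * (ln C2 - ln c) + (1-p)/(1+p) * ln (p+1) + ln (Gamma (2/(p+1)))"
    unfolding X_def using G1 G1n c C2pos p by (simp add: ln_mult ln_div ln_powr)
  have lnY: "ln Y = ln C3 + 1/(p+1) * (ln C2 - ln c - p * ln (p+1)) + ln (Gamma (1/(p+1)))"
    unfolding Y_def using G1 G1n c C2pos C3pos p by (simp add: ln_mult ln_div ln_powr)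
  have apos: "a powr (1/q) > 0" using a by simp
  have qinv: "q * inverse q = 1" using qpos by simp
  have pinv: "(p + 1) * inverse (p + 1) = 1" using p by simp
  have qq: "1 + q \<noteq> 0" "q + 1 \<noteq> 0" "q * 4 + q * (q * 4) \<noteq> 0" "q * 2 + q * q * 2 \<noteq> 0" "1 + q > 0"
    using qpos by (auto simp: algebra_simps) (smt (verit) mult_pos_pos qpos)+
  have lnapq: "ln (a powr (1/q)) = ln a / q" using a by (simp add: ln_powr)
  have T1: "a * T^2 / 2 = C3^2/2 / C2^2 * a powr (1/q)"
  proof -
    have "ln (a * T^2 / 2) = ln (C3^2/2 / C2^2 * a powr (1/q))"
      using a T C2pos C3pos apos h0pos mu0pos
      apply (simp add: ln_mult ln_div ln_realpow lnapq T_def)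
      unfolding lnmu0 lnh0 lnK lnC2 lnC3 using qpos unfolding peq by (simp add: field_simps)
    thus ?thesis using a T C2pos C3pos apos by simp
  qed
  have T2: "a * B = X / C2^2 * a powr (1/q)"
  proof -
    have Bpos: "B > 0" unfolding B_def using G1 L p by simp
    have "ln (a * B) = ln (X / C2^2 * a powr (1/q))"
      using a Bpos C2pos Xpos apos
      apply (simp add: ln_mult ln_div ln_realpow lnapq)
      unfolding lnB lnL lnX lnh0 lnK lnC2
      apply (simp only: divide_inverse add.commute[of 1 p])
      using q_def qinv pinv by algebra
    thus ?thesis using a Bpos C2pos Xpos apos by simp
  qed
  have T3: "a * T * A = Y / C2^2 * a powr (1/q)"
  proof -
    have Apos: "A > 0" unfolding A_def using G1 L p by simp
    have "ln (a * T * A) = ln (Y / C2^2 * a powr (1/q))"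
      using a T Apos C2pos Ypos apos h0pos mu0pos
      apply (simp add: ln_mult ln_div ln_realpow lnapq T_def)
      unfolding lnA lnL lnY lnmu0 lnh0 lnK lnC2 lnC3
      apply (simp only: divide_inverse add.commute[of 1 p])
      using q_def qinv pinv by algebra
    thus ?thesis using a T Apos C2pos Ypos apos by simp
  qed
  have E2: "U = c5 p c * a powr (1/q)"
    unfolding U_def c5eq T1[symmetric] using T1 T2 T3 C2pos by (simp add: field_simps)
  show ?thesis
  proof (intro exI conjI)
    show "(x1 \<longlongrightarrow> h) at_top" by (rule hlim)
    show "((\<lambda>t. h * t - x t) \<longlongrightarrow> mu) at_top" using mulim unfolding psi_def .
    show "c4 p c * a powr (1 / (2*p+1)) \<le> mu" using E1 mu0mu unfolding q_def by simp
    show "mu \<le> c5 p c * a powr (1 / (2*p+1))" using E2 muU unfolding q_def by simp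
  qed
qed
end
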